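(* Let $(TQ\times\mathbb R^m,\vec\lambda^L,E_L)$ be the $m$-contact Lagrangian system of a regular Lagrangian $L:TQ\times\mathbb R^m\to\mathbb R$, and let $$X=F_i\frac{\partial}{\partial q^i}+G_j\frac{\partial}{\partial \dot q^j}+H_k\frac{\partial}{\partial z^k},\qquad F_i,G_j,H_k\in C^\infty(TQ\times\mathbb R^m),$$ be a vector field on $TQ\times\mathbb R^m$. If $$-X(L)-[X_{E_L},X]^v(L)+\sum_{k=1}^m\frac{\partial L}{\partial z^k}H_k=0,$$ then the function $X^v(L)$ is a dissipated quantity of the system, i.e. $X_{E_L}(X^v(L))=-X^v(L)\sum_{k=1}^mR_k(E_L)$.
   Context: $Q$ is an $n$-dimensional manifold; $TQ\times\mathbb R^m$ has local coordinates $(q^i,\dot q^i,z^1,\dots,z^m)$. $L$ is regular if the matrix $W_{ij}=\partial^2L/\partial\dot q^i\partial\dot q^j$ is invertible; $(W^{ij})$ denotes its inverse. Define the $1$-forms $\lambda^L_k=dz^k-\frac{\partial L}{\partial\dot q^j}dq^j$, $k=1,\dots,m$ (so $d\lambda^L_k=d\lambda^L_1$ for all $k$), the vector fields $R_k=\frac{\partial}{\partial z^k}-W^{ij}\frac{\partial^2L}{\partial\dot q^i\partial z^k}\frac{\partial}{\partial\dot q^j}$ (which satisfy $\lambda^L_i(R_k)=\delta^i_k$, $i_{R_k}d\lambda^L_1=0$), and the energy $E_L=\dot q^i\frac{\partial L}{\partial\dot q^i}-L$. The forms $\lambda^L_k$ define a uniform $m$-contact structure on $TQ\times\mathbb R^m$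 with Reeb vector fields $R_k$. $X_{E_L}$ is the unique vector field with $\lambda^L_k(X_{E_L})=-E_L$ for all $k$ and $i_{X_{E_L}}d\lambda^L_1=dE_L-\sum_{k=1}^mR_k(E_L)\lambda^L_k$. The vertical endomorphism is $S=\frac{\partial}{\partial\dot q^i}\otimes dq^i$, and for a vector field $Z=F_i\partial_{q^i}+G_j\partial_{\dot q^j}+H_k\partial_{z^k}$ one writes $Z^v:=S(Z)=F_i\frac{\partial}{\partial\dot q^i}$. A function $g$ is a dissipated quantity if $X_{E_L}(g)=-g\sum_{k=1}^mR_k(E_L)$. *)

theory Defs
  imports "HOL-Analysis.Analysis"
begin

text \<open>Local coordinates (q, qdot, z) on TQ x R^m, with n = CARD('n), m = CARD('m).\<close>
type_synonym ('n, 'm) pt = "(real^'n) \<times> (real^'n) \<times> (real^'m)"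

text \<open>C-infinity on an open set D: differentiable, and all first partial
  derivatives again C-infinity (greatest fixed point).\<close>
coinductive smooth_on :: "'a::euclidean_space set \<Rightarrow> ('a \<Rightarrow> real) \<Rightarrow> bool" where
  "(\<forall>x\<in>D. f differentiable (at x)) \<Longrightarrow>
   (\<forall>b\<in>Basis. smooth_on D (\<lambda>x. frechet_derivative f (at x) b)) \<Longrightarrow> smooth_on D f"

definition smooth_vf :: "'a::euclidean_space set \<Rightarrow> ('a \<Rightarrow> 'a) \<Rightarrow> bool" where
  "smooth_vf D X \<longleftrightarrow> (\<forall>b\<in>Basis. smooth_on D (\<lambda>p. X p \<bullet> b))"

definition qc :: "('n,'m) pt \<Rightarrow> real^'n" where "qc p = fst p"
definition vc :: "('n,'m) pt \<Rightarrow> real^'n" where "vc p = fst (snd p)"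
definition zc :: "('n,'m) pt \<Rightarrow> real^'m" where "zc p = snd (snd p)"

definition vf_apply :: "('a::real_normed_vector \<Rightarrow> 'a) \<Rightarrow> ('a \<Rightarrow> real) \<Rightarrow> 'a \<Rightarrow> real" where
  "vf_apply X f p = frechet_derivative f (at p) (X p)"

definition pq :: "(('n::finite,'m::finite) pt \<Rightarrow> real) \<Rightarrow> 'n \<Rightarrow> ('n,'m) pt \<Rightarrow> real" where
  "pq f i p = frechet_derivative f (at p) (axis i 1, 0, 0)"
definition pv :: "(('n::finite,'m::finite) pt \<Rightarrow> real) \<Rightarrow> 'n \<Rightarrow> ('n,'m) pt \<Rightarrow> real" where
  "pv f i p = frechet_derivative f (at p) (0, axis i 1, 0)"
definition pz :: "(('n::finite,'m::finite) pt \<Rightarrow> real) \<Rightarrow> 'm \<Rightarrow> ('n,'m) pt \<Rightarrow> real" where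
  "pz f k p = frechet_derivative f (at p) (0, 0, axis k 1)"

definition lie_bracket :: "('a::real_normed_vector \<Rightarrow> 'a) \<Rightarrow> ('a \<Rightarrow> 'a) \<Rightarrow> 'a \<Rightarrow> 'a" where
  "lie_bracket A B p = frechet_derivative B (at p) (A p) - frechet_derivative A (at p) (B p)"

text \<open>Vertical endomorphism S = d/dqdot^i (x) dq^i on tangent vectors.\<close>
definition vert :: "('n::finite,'m::finite) pt \<Rightarrow> ('n,'m) pt" where
  "vert w = (0, qc w, 0)"

definition Wmat :: "(('n::finite,'m::finite) pt \<Rightarrow> real) \<Rightarrow> ('n,'m) pt \<Rightarrow> real^'n^'n" where
  "Wmat L p = (\<chi> i j. pv (pv L j) i p)"

definition regular :: "('n::finite,'m::finite) pt set \<Rightarrow> (('n,'m) pt \<Rightarrow> real) \<Rightarrow> bool" where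
  "regular D L \<longleftrightarrow> (\<forall>p\<in>D. invertible (Wmat L p))"

definition energy :: "(('n::finite,'m::finite) pt \<Rightarrow> real) \<Rightarrow> ('n,'m) pt \<Rightarrow> real" where
  "energy L p = (\<Sum>i\<in>UNIV. vc p $ i * pv L i p) - L p"

definition lam :: "(('n::finite,'m::finite) pt \<Rightarrow> real) \<Rightarrow> 'm \<Rightarrow> ('n,'m) pt \<Rightarrow> ('n,'m) pt \<Rightarrow> real" where
  "lam L k p w = zc w $ k - (\<Sum>j\<in>UNIV. pv L j p * qc w $ j)"

text \<open>Exterior derivative of a 1-form on a vector space:
  (d alpha)_p(u,w) = u(alpha(w)) - w(alpha(u)) (u, w constant).\<close>
definition d1form :: "('a::real_normed_vector \<Rightarrow> 'a \<Rightarrow> real) \<Rightarrow> 'a \<Rightarrow> 'a \<Rightarrow> 'a \<Rightarrow> real" where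
  "d1form \<alpha> p u w = frechet_derivative (\<lambda>x. \<alpha> x w) (at p) u - frechet_derivative (\<lambda>x. \<alpha> x u) (at p) w"

definition reeb :: "(('n::finite,'m::finite) pt \<Rightarrow> real) \<Rightarrow> 'm \<Rightarrow> ('n,'m) pt \<Rightarrow> ('n,'m) pt" where
  "reeb L k p = (0,
     (\<chi> j. - (\<Sum>i\<in>UNIV. matrix_inv (Wmat L p) $ i $ j * pv (pz L k) i p)),
     axis k 1)"

definition is_XEL :: "('n::finite,'m::finite) pt set \<Rightarrow> (('n,'m) pt \<Rightarrow> real) \<Rightarrow> (('n,'m) pt \<Rightarrow> ('n,'m) pt) \<Rightarrow> bool" where
  "is_XEL D L XE \<longleftrightarrow>
     (\<forall>p\<in>D. \<forall>k. lam L k p (XE p) = - energy L p) \<and>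
     (\<forall>p\<in>D. \<forall>k. \<forall>w. d1form (lam L k) p (XE p) w =
         frechet_derivative (energy L) (at p) w
         - (\<Sum>k'\<in>UNIV. vf_apply (reeb L k') (energy L) p * lam L k' p w))"

definition dissipated :: "('n::finite,'m::finite) pt set \<Rightarrow> (('n,'m) pt \<Rightarrow> real) \<Rightarrow> (('n,'m) pt \<Rightarrow> ('n,'m) pt) \<Rightarrow> (('n,'m) pt \<Rightarrow> real) \<Rightarrow> bool" where
  "dissipated D L XE g \<longleftrightarrow>
     (\<forall>p\<in>D. vf_apply XE g p = - g p * (\<Sum>k\<in>UNIV. vf_apply (reeb L k) (energy L) p))"

end

theory Submission
  imports Defs
begin

lemma smooth_diff: "smooth_on D f \<Longrightarrow> x \<in> D \<Longrightarrow> f differentiable (at x)"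
  by (erule smooth_on.cases) auto

lemma smooth_deriv: "smooth_on D f \<Longrightarrow> b \<in> Basis \<Longrightarrow> smooth_on D (\<lambda>x. frechet_derivative f (at x) b)"
  by (erule smooth_on.cases) auto

lemma axis_Basis: "(axis i 1 :: real^'n::finite) \<in> Basis"
  by (auto simp: Basis_vec_def)
lemma basis_q: "((axis i 1, 0, 0) :: ('n::finite,'m::finite) pt) \<in> Basis"
  using axis_Basis[of i] unfolding Basis_prod_def zero_prod_def by blast
lemma basis_v: "((0, axis i 1, 0) :: ('n::finite,'m::finite) pt) \<in> Basis"
  using axis_Basis[of i] unfolding Basis_prod_def zero_prod_def by blast
lemma basis_z: "((0, 0, axis i 1) :: ('n::finite,'m::finite) pt) \<in> Basis"
  using axis_Basis[of i] unfolding Basis_prod_def zero_prod_def by blast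

lemma smooth_pv: "smooth_on D L \<Longrightarrow> smooth_on D (pv L j)"
proof -
  assume "smooth_on D L"
  from smooth_deriv[OF this basis_v[of j]] show ?thesis
    by (simp add: pv_def[abs_def])
qed

lemma fd_lin: "f differentiable (at p) \<Longrightarrow> linear (frechet_derivative f (at p))"
  using frechet_derivative_works has_derivative_linear by blast

lemma vec_expand: "(x::real^'n::finite) = (\<Sum>i\<in>UNIV. x $ i *\<^sub>R axis i 1)"
  by (simp add: vec_eq_iff axis_def sum_component if_distrib cong: if_cong)

lemma decomp0:
  fixes w :: "('n::finite,'m::finite) pt"
  shows "w = (\<Sum>i\<in>UNIV. qc w $ i *\<^sub>R (axis i 1, 0, 0)) + (\<Sum>i\<in>UNIV. vc w $ i *\<^sub>R (0, axis i 1, 0))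
      + (\<Sum>k\<in>UNIV. zc w $ k *\<^sub>R (0, 0, axis k 1))"
  apply (simp add: prod_eq_iff fst_sum snd_sum qc_def vc_def zc_def)
  apply (intro conjI vec_expand)
  done

lemma decomp:
  fixes w :: "('n::finite,'m::finite) pt"
  assumes "linear l"
  shows "l w = (\<Sum>i\<in>UNIV. qc w $ i * l (axis i 1, 0, 0)) + (\<Sum>i\<in>UNIV. vc w $ i * l (0, axis i 1, 0))
      + (\<Sum>k\<in>UNIV. zc w $ k * l (0, 0, axis k 1))"
  apply (subst decomp0)
  apply (simp only: linear_add[OF assms] linear_sum[OF assms] linear_scale[OF assms] real_scaleR_def)
  done


lemma axis_comp: "axis i (1::real) $ j = (if j = i then 1 else 0)"
  by (simp add: axis_def)

lemma fd_comp_lin: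
  assumes "f differentiable (at p)" "bounded_linear g"
  shows "frechet_derivative (\<lambda>x. g (f x)) (at p) h = g (frechet_derivative f (at p) h)"
    and "(\<lambda>x. g (f x)) differentiable (at p)"
proof -
  have "((\<lambda>x. g (f x)) has_derivative (\<lambda>h. g (frechet_derivative f (at p) h))) (at p)"
    using bounded_linear.has_derivative[OF assms(2) frechet_derivative_works[THEN iffD1, OF assms(1)]] .
  then show "frechet_derivative (\<lambda>x. g (f x)) (at p) h = g (frechet_derivative f (at p) h)"
    and "(\<lambda>x. g (f x)) differentiable (at p)"
    using frechet_derivative_at differentiableI by metis+
qed

lemma vf_diff:
  assumes "smooth_vf D X" "p \<in> D"
  shows "X differentiable (at p)"
proof -
  have "X = (\<lambda>x. \<Sum>b\<in>Basis. (X x \<bullet> b) *\<^sub>R b)" by (simp add: euclidean_representation)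
  moreover have "(\<lambda>x. \<Sum>b\<in>Basis. (X x \<bullet> b) *\<^sub>R b) differentiable (at p)"
    using assms smooth_diff unfolding smooth_vf_def
    by (intro differentiable_sum ballI differentiable_scaleR differentiable_const) auto
  ultimately show ?thesis by simp
qed

lemma bl_vc: "bounded_linear (\<lambda>x::('n::finite,'m::finite) pt. vc x $ i)"
  unfolding vc_def
  by (intro bounded_linear_compose[OF bounded_linear_vec_nth] bounded_linear_compose[OF bounded_linear_fst]
      bounded_linear_snd)
lemma bl_qc: "bounded_linear (\<lambda>x::('n::finite,'m::finite) pt. qc x $ i)"
  unfolding qc_def
  by (intro bounded_linear_compose[OF bounded_linear_vec_nth] bounded_linear_fst)

lemma energy_fd:
  fixes L :: "('n::finite,'m::finite) pt \<Rightarrow> real"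
  assumes "L differentiable (at x)" "\<And>j. pv L j differentiable (at x)"
  shows "frechet_derivative (energy L) (at x) w =
     (\<Sum>j\<in>UNIV. vc x $ j * frechet_derivative (pv L j) (at x) w + vc w $ j * pv L j x) - frechet_derivative L (at x) w"
proof -
  have H: "((\<lambda>x. (\<Sum>j\<in>UNIV. vc x $ j * pv L j x) - L x) has_derivative
     (\<lambda>w. (\<Sum>j\<in>UNIV. vc x $ j * frechet_derivative (pv L j) (at x) w + vc w $ j * pv L j x) - frechet_derivative L (at x) w)) (at x)"
    apply (intro has_derivative_diff has_derivative_sum has_derivative_mult)
      apply (rule bounded_linear_imp_has_derivative[OF bl_vc])
    using assms frechet_derivative_works apply blast+
    done
  have eq: "energy L = (\<lambda>x. (\<Sum>j\<in>UNIV. vc x $ j * pv L j x) - L x)"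
    by (simp add: energy_def[abs_def])
  have "frechet_derivative (energy L) (at x) =
     (\<lambda>w. (\<Sum>j\<in>UNIV. vc x $ j * frechet_derivative (pv L j) (at x) w + vc w $ j * pv L j x) - frechet_derivative L (at x) w)"
    unfolding eq by (rule frechet_derivative_at[OF H, symmetric])
  then show ?thesis by simp
qed

lemma lam_fd:
  fixes L :: "('n::finite,'m::finite) pt \<Rightarrow> real"
  assumes "\<And>j. pv L j differentiable (at x)"
  shows "frechet_derivative (\<lambda>y. lam L k y w) (at x) h = - (\<Sum>j\<in>UNIV. frechet_derivative (pv L j) (at x) h * qc w $ j)"
proof -
  have H: "((\<lambda>y. zc w $ k - (\<Sum>j\<in>UNIV. pv L j y * qc w $ j)) has_derivative
     (\<lambda>h. 0 - (\<Sum>j\<in>UNIV. frechet_derivative (pv L j) (at x) h * qc w $ j))) (at x)"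
    apply (intro has_derivative_diff has_derivative_sum has_derivative_mult_left has_derivative_const)
    using assms frechet_derivative_works apply blast+
    done
  have eq: "(\<lambda>y. lam L k y w) = (\<lambda>y. zc w $ k - (\<Sum>j\<in>UNIV. pv L j y * qc w $ j))"
    by (simp add: lam_def[abs_def])
  have "frechet_derivative (\<lambda>y. lam L k y w) (at x) = 
     (\<lambda>h. 0 - (\<Sum>j\<in>UNIV. frechet_derivative (pv L j) (at x) h * qc w $ j))"
    unfolding eq by (rule frechet_derivative_at[OF H, symmetric])
  then show ?thesis by simp
qed


theorem theorem3:
  fixes D :: "('n::finite, 'm::finite) pt set"
    and L :: "('n, 'm) pt \<Rightarrow> real"
    and XE X :: "('n, 'm) pt \<Rightarrow> ('n, 'm) pt"
  assumes "open D"
    and "smooth_on D L"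
    and "regular D L"
    and "smooth_vf D XE"
    and "is_XEL D L XE"
    and "smooth_vf D X"
    and "\<forall>p\<in>D. - vf_apply X L p
               - frechet_derivative L (at p) (vert (lie_bracket XE X p))
               + (\<Sum>k\<in>UNIV. pz L k p * zc (X p) $ k) = 0"
  shows "dissipated D L XE (\<lambda>p. frechet_derivative L (at p) (vert (X p)))"
proof -
  define \<rho> where "\<rho> p = (\<Sum>k\<in>UNIV. vf_apply (reeb L k) (energy L) p)" for p
  note dL = smooth_diff[OF assms(2)]
  have dpv: "pv L j differentiable (at x)" if "x \<in> D" for x j
    using smooth_diff[OF smooth_pv[OF assms(2)] that] .
  have E2: "- (\<Sum>j\<in>UNIV. frechet_derivative (pv L j) (at x) (XE x) * qc w $ j)
      + (\<Sum>j\<in>UNIV. frechet_derivative (pv L j) (at x) w * qc (XE x) $ j)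
      = (\<Sum>j\<in>UNIV. vc x $ j * frechet_derivative (pv L j) (at x) w + vc w $ j * pv L j x) - frechet_derivative L (at x) w
        - (\<Sum>k'\<in>UNIV. vf_apply (reeb L k') (energy L) x * lam L k' x w)" if "x \<in> D" for x w
  proof -
    have "d1form (lam L undefined) x (XE x) w = frechet_derivative (energy L) (at x) w
         - (\<Sum>k'\<in>UNIV. vf_apply (reeb L k') (energy L) x * lam L k' x w)"
      using assms(5) that unfolding is_XEL_def by blast
    then show ?thesis
      unfolding d1form_def lam_fd[OF dpv[OF that]] energy_fd[OF dL[OF that] dpv[OF that]]
      by simp
  qed
  have aeqv: "qc (XE x) = vc x" if "x \<in> D" for x
  proof -
    have "(Wmat L x *v qc (XE x)) $ i = (Wmat L x *v vc x) $ i" for i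
    proof -
      have 1: "frechet_derivative (pv L j) (at x) (0, axis i 1, 0) = Wmat L x $ i $ j" for j
        by (simp add: Wmat_def pv_def)
      have 2: "(\<Sum>j\<in>UNIV. vc ((0, axis i 1, 0)::('n,'m) pt) $ j * pv L j x) = pv L i x"
        by (subst sum.cong[OF refl, where h="\<lambda>j. if j = i then pv L j x else 0"]) (auto simp: vc_def axis_comp)
      have 3: "frechet_derivative L (at x) (0, axis i 1, 0) = pv L i x" by (simp add: pv_def)
      from E2[OF that, of "(0, axis i 1, 0)"] 2 3
      show ?thesis
        by (simp add: 1 matrix_vector_mult_def qc_def lam_def zc_def sum.distrib mult.commute)
    qed
    then have W: "Wmat L x *v qc (XE x) = Wmat L x *v vc x" by (simp add: vec_eq_iff)
    have "invertible (Wmat L x)" using assms(3) that unfolding regular_def by simp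
    then obtain A' where A': "A' ** Wmat L x = mat 1" unfolding invertible_def by auto
    from W have "A' *v (Wmat L x *v qc (XE x)) = A' *v (Wmat L x *v vc x)" by simp
    then show ?thesis using A' by (simp add: matrix_vector_mul_assoc)
  qed
  have EL: "frechet_derivative (pv L i) (at x) (XE x) = pq L i x - \<rho> x * pv L i x" if "x \<in> D" for x i
  proof -
    have 1: "frechet_derivative (pv L j) (at x) (axis i 1, 0, 0) = pq (pv L j) i x" for j
      by (simp add: pq_def)
    have 2: "(\<Sum>j\<in>UNIV. frechet_derivative (pv L j) (at x) (XE x) * qc ((axis i 1, 0, 0)::('n,'m) pt) $ j)
         = frechet_derivative (pv L i) (at x) (XE x)"
      by (subst sum.cong[OF refl, where h="\<lambda>j. if j = i then frechet_derivative (pv L j) (at x) (XE x) else 0"]) (auto simp: qc_def axis_comp)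
    have 3: "lam L k' x (axis i 1, 0, 0) = - pv L i x" for k'
      unfolding lam_def
      by (subst sum.cong[OF refl, where h="\<lambda>j. if j = i then pv L j x else 0"]) (auto simp: qc_def zc_def axis_comp)
    have 4: "frechet_derivative L (at x) (axis i 1, 0, 0) = pq L i x" by (simp add: pq_def)
    have 5: "(\<Sum>j\<in>UNIV. vc x $ j * frechet_derivative (pv L j) (at x) (axis i 1, 0, 0) + vc ((axis i 1, 0, 0)::('n,'m) pt) $ j * pv L j x)
        = (\<Sum>j\<in>UNIV. vc x $ j * pq (pv L j) i x)"
      by (simp add: vc_def pq_def)
    have 6: "(\<Sum>j\<in>UNIV. frechet_derivative (pv L j) (at x) (axis i 1, 0, 0) * qc (XE x) $ j)
        = (\<Sum>j\<in>UNIV. vc x $ j * pq (pv L j) i x)"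
      by (simp add: aeqv[OF that] pq_def mult.commute)
    have 7: "(\<Sum>k'\<in>UNIV. vf_apply (reeb L k') (energy L) x * lam L k' x (axis i 1, 0, 0)) = - (\<rho> x * pv L i x)"
      by (simp add: 3 \<rho>_def sum_distrib_right sum_negf)
    from E2[OF that, of "(axis i 1, 0, 0)"] show ?thesis
      unfolding 2 4 5 6 7 by linarith
  qed
  show ?thesis unfolding dissipated_def
  proof
    fix p assume pD: "p \<in> D"
    define F where "F i x = qc (X x) $ i" for i x
    define g where "g x = (\<Sum>i\<in>UNIV. F i x * pv L i x)" for x
    have dX: "X differentiable (at p)" using vf_diff[OF assms(6) pD] .
    have dXE: "XE differentiable (at p)" using vf_diff[OF assms(4) pD] .
    have dF: "F i differentiable (at p)" for i
      unfolding F_def[abs_def] using fd_comp_lin(2)[OF dX bl_qc] .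
    have DF: "frechet_derivative (F i) (at p) h = qc (frechet_derivative X (at p) h) $ i" for i h
      unfolding F_def[abs_def] using fd_comp_lin(1)[OF dX bl_qc] .
    have geq: "frechet_derivative L (at x) (vert (X x)) = g x" if "x \<in> D" for x
      using decomp[OF fd_lin[OF dL[OF that]], of "vert (X x)"]
      by (simp add: g_def F_def vert_def qc_def vc_def zc_def pv_def)
    have gder: "(g has_derivative (\<lambda>h. \<Sum>i\<in>UNIV. F i p * frechet_derivative (pv L i) (at p) h
                 + frechet_derivative (F i) (at p) h * pv L i p)) (at p)"
      unfolding g_def[abs_def]
      apply (intro has_derivative_sum has_derivative_mult)
      using dF dpv[OF pD] frechet_derivative_works by blast+
    have "vf_apply XE (\<lambda>p. frechet_derivative L (at p) (vert (X p))) p = frechet_derivative g (at p) (XE p)"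
      unfolding vf_apply_def
      using frechet_derivative_transform_within_open[OF differentiableI[OF gder] assms(1) pD geq[symmetric]]
      by simp
    also have "\<dots> = (\<Sum>i\<in>UNIV. F i p * frechet_derivative (pv L i) (at p) (XE p)
                 + frechet_derivative (F i) (at p) (XE p) * pv L i p)"
      by (simp add: frechet_derivative_at[OF gder, symmetric])
    also have "\<dots> = (\<Sum>i\<in>UNIV. F i p * pq L i p) - \<rho> p * g p
         + (\<Sum>i\<in>UNIV. frechet_derivative (F i) (at p) (XE p) * pv L i p)"
      unfolding EL[OF pD] g_def
      by (simp add: sum.distrib sum_subtractf sum_distrib_left algebra_simps)
    also have "(\<Sum>i\<in>UNIV. frechet_derivative (F i) (at p) (XE p) * pv L i p) = - (\<Sum>i\<in>UNIV. F i p * pq L i p)"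
    proof -
      have a: "vf_apply X L p = (\<Sum>i\<in>UNIV. F i p * pq L i p) + (\<Sum>i\<in>UNIV. vc (X p) $ i * pv L i p)
               + (\<Sum>k\<in>UNIV. zc (X p) $ k * pz L k p)"
        unfolding vf_apply_def
        using decomp[OF fd_lin[OF dL[OF pD]], of "X p"]
        by (simp add: F_def pq_def pv_def pz_def)
      have c: "qc (frechet_derivative XE (at p) (X p)) $ i = vc (X p) $ i" for i
      proof -
        have "qc (frechet_derivative XE (at p) (X p)) $ i = frechet_derivative (\<lambda>x. qc (XE x) $ i) (at p) (X p)"
          using fd_comp_lin(1)[OF dXE bl_qc] by simp
        also have "\<dots> = frechet_derivative (\<lambda>x. vc x $ i) (at p) (X p)"
          using frechet_derivative_transform_within_open[OF fd_comp_lin(2)[OF dXE bl_qc] assms(1) pD, where g="\<lambda>x. vc x $ i"]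
            aeqv by simp
        also have "\<dots> = vc (X p) $ i"
          using frechet_derivative_at[OF bounded_linear_imp_has_derivative[OF bl_vc]] by metis
        finally show ?thesis .
      qed
      have vl: "vert (lie_bracket XE X p) = (0, qc (frechet_derivative X (at p) (XE p)) - qc (frechet_derivative XE (at p) (X p)), 0)"
        by (simp add: vert_def lie_bracket_def qc_def)
      have vq: "qc (vert (lie_bracket XE X p)) = 0" and vz: "zc (vert (lie_bracket XE X p)) = 0"
        by (simp_all add: vl qc_def zc_def)
      have vc_l: "vc (vert (lie_bracket XE X p)) $ i = frechet_derivative (F i) (at p) (XE p) - vc (X p) $ i" for i
      proof -
        have "vc (vert (lie_bracket XE X p)) $ i = qc (frechet_derivative X (at p) (XE p)) $ i - qc (frechet_derivative XE (at p) (X p)) $ i"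
          by (simp add: vl vc_def)
        then show ?thesis by (simp add: DF c)
      qed
      have b: "frechet_derivative L (at p) (vert (lie_bracket XE X p))
          = (\<Sum>i\<in>UNIV. frechet_derivative (F i) (at p) (XE p) * pv L i p) - (\<Sum>i\<in>UNIV. vc (X p) $ i * pv L i p)"
        using decomp[OF fd_lin[OF dL[OF pD]], of "vert (lie_bracket XE X p)"]
        by (simp add: vq vz vc_l pv_def sum_subtractf left_diff_distrib)
      have h: "- vf_apply X L p - frechet_derivative L (at p) (vert (lie_bracket XE X p))
               + (\<Sum>k\<in>UNIV. pz L k p * zc (X p) $ k) = 0" using assms(7) pD by blast
      show ?thesis using h unfolding a b by (simp add: mult.commute)
    qed
    finally show "vf_apply XE (\<lambda>p. frechet_derivative L (at p) (vert (X p))) p =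
         - frechet_derivative L (at p) (vert (X p)) * (\<Sum>k\<in>UNIV. vf_apply (reeb L k) (energy L) p)"
      using geq[OF pD] by (simp add: \<rho>_def)
  qed
qed

end
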